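(* Let $A$ be a subalgebra of a $K$-algebra $E$, $\Delta\subseteq\mathrm{Der}_A(E)$, and let $S$ be a regular left Ore set of $E$ with $S\subseteq N_\Delta(E)_0$. Then: (1) $A\subseteq E\subseteq S^{-1}E$, and each $\delta\in\Delta$ extends (via $\delta(s^{-1}e)=s^{-1}\delta(e)$) to an element of $\mathrm{Der}_A(S^{-1}E)$; thus $\Delta\subseteq\mathrm{Der}_A(S^{-1}E)$. (2) $S$ is a regular left Ore set of $N_\Delta(E)$. (3) $N_\Delta(S^{-1}E)=S^{-1}N_\Delta(E)$. (4) For all $i\geq0$, $N_\Delta(S^{-1}E)_i=S^{-1}N_\Delta(E)_i$.
   Context: $\mathrm{Der}_A(E)$ is the set of derivations of $E$ that are $A$-module homomorphisms. For $i\ge1$, $\Delta^i=\{\delta_1\cdots\delta_i\mid\delta_j\in\Delta\}$; for an algebra $B$ with $\Delta$ acting by derivations, $N_\Delta(B)_i=\{b\in B\mid\Delta^{i+1}b=0\}$ ($i\ge0$) and $N_\Delta(B)=\bigcup_iN_\Delta(B)_i$. A regular left Ore set is a multiplicative set of non-zero-divisors satisfying the left Ore condition; $S^{-1}E$ is the corresponding left localization, and $S^{-1}N_\Delta(E)_i=\{s^{-1}n\mid s\in S,n\in N_\Delta(E)_i\}$. *)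

theory Defs
  imports Main
begin

text \<open>Rings are modelled as types of class ring_1 (the whole type is the ring).
  A K-algebra structure on a ring E is a ring homomorphism from the field K
  into the centre of E.\<close>

definition is_ring_hom :: "('a::ring_1 \<Rightarrow> 'b::ring_1) \<Rightarrow> bool" where
  "is_ring_hom f \<longleftrightarrow> f 1 = 1 \<and> (\<forall>x y. f (x + y) = f x + f y) \<and> (\<forall>x y. f (x * y) = f x * f y)"

definition K_algebra_map :: "('k::field \<Rightarrow> 'e::ring_1) \<Rightarrow> bool" where
  "K_algebra_map alg \<longleftrightarrow> is_ring_hom alg \<and> (\<forall>k x. alg k * x = x * alg k)"

definition subring :: "'e::ring_1 set \<Rightarrow> bool" where
  "subring B \<longleftrightarrow> 1 \<in> B \<and> (\<forall>x\<in>B. \<forall>y\<in>B. x + y \<in> B \<and> x * y \<in> B) \<and> (\<forall>x\<in>B. - x \<in> B)"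

definition subalgebra :: "('k::field \<Rightarrow> 'e::ring_1) \<Rightarrow> 'e set \<Rightarrow> bool" where
  "subalgebra alg B \<longleftrightarrow> subring B \<and> range alg \<subseteq> B"

definition Der :: "('k::field \<Rightarrow> 'e::ring_1) \<Rightarrow> 'e set \<Rightarrow> ('e \<Rightarrow> 'e) set" where
  "Der alg B = {\<delta>. (\<forall>x y. \<delta> (x + y) = \<delta> x + \<delta> y)
                 \<and> (\<forall>k x. \<delta> (alg k * x) = alg k * \<delta> x)
                 \<and> (\<forall>x y. \<delta> (x * y) = \<delta> x * y + x * \<delta> y)
                 \<and> (\<forall>a\<in>B. \<forall>x. \<delta> (a * x) = a * \<delta> x)}"

fun Dpow :: "('e \<Rightarrow> 'e) set \<Rightarrow> nat \<Rightarrow> ('e \<Rightarrow> 'e) set" where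
  "Dpow D 0 = {id}"
| "Dpow D (Suc i) = {\<delta> \<circ> d | \<delta> d. \<delta> \<in> D \<and> d \<in> Dpow D i}"

definition N_Delta_i :: "('e::ring_1 \<Rightarrow> 'e) set \<Rightarrow> nat \<Rightarrow> 'e set" where
  "N_Delta_i D i = {b. \<forall>d\<in>Dpow D (Suc i). d b = 0}"

definition N_Delta :: "('e::ring_1 \<Rightarrow> 'e) set \<Rightarrow> 'e set" where
  "N_Delta D = (\<Union>i. N_Delta_i D i)"

definition regular_left_Ore :: "'e::ring_1 set \<Rightarrow> 'e set \<Rightarrow> bool" where
  "regular_left_Ore R S \<longleftrightarrow> S \<subseteq> R \<and> 1 \<in> S \<and> (\<forall>s\<in>S. \<forall>t\<in>S. s * t \<in> S)
     \<and> (\<forall>s\<in>S. \<forall>r\<in>R. (s * r = 0 \<longrightarrow> r = 0) \<and> (r * s = 0 \<longrightarrow> r = 0))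
     \<and> (\<forall>s\<in>S. \<forall>r\<in>R. \<exists>s'\<in>S. \<exists>r'\<in>R. s' * r = r' * s)"

definition is_unit :: "'q::ring_1 \<Rightarrow> bool" where
  "is_unit x \<longleftrightarrow> (\<exists>y. y * x = 1 \<and> x * y = 1)"

definition uinv :: "'q::ring_1 \<Rightarrow> 'q" where
  "uinv x = (THE y. y * x = 1 \<and> x * y = 1)"

definition left_localization :: "'e::ring_1 set \<Rightarrow> ('e \<Rightarrow> 'q::ring_1) \<Rightarrow> bool" where
  "left_localization S \<phi> \<longleftrightarrow> is_ring_hom \<phi> \<and> inj \<phi> \<and> (\<forall>s\<in>S. is_unit (\<phi> s))
     \<and> (\<forall>q. \<exists>s\<in>S. \<exists>e. q = uinv (\<phi> s) * \<phi> e)"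

definition loc_set :: "'e::ring_1 set \<Rightarrow> ('e \<Rightarrow> 'q::ring_1) \<Rightarrow> 'e set \<Rightarrow> 'q set" where
  "loc_set S \<phi> N = {uinv (\<phi> s) * \<phi> n | s n. s \<in> S \<and> n \<in> N}"

definition ext_der :: "'e::ring_1 set \<Rightarrow> ('e \<Rightarrow> 'q::ring_1) \<Rightarrow> ('e \<Rightarrow> 'e) \<Rightarrow> 'q \<Rightarrow> 'q" where
  "ext_der S \<phi> \<delta> = (THE D. \<forall>s\<in>S. \<forall>e. D (uinv (\<phi> s) * \<phi> e) = uinv (\<phi> s) * \<phi> (\<delta> e))"

end

theory Submission imports Defs begin

lemma uinv_prop:
  fixes x :: "'q::ring_1"
  assumes "is_unit x" shows "uinv x * x = 1 \<and> x * uinv x = 1"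
proof -
  obtain y where y: "y * x = 1" "x * y = 1" using assms unfolding is_unit_def by blast
  have uq: "\<And>z. z * x = 1 \<and> x * z = 1 \<Longrightarrow> z = y"
  proof -
    fix z assume z: "z * x = 1 \<and> x * z = 1"
    have "z = z * (x * y)" using y by simp
    also have "\<dots> = (z * x) * y" by (simp add: mult.assoc)
    also have "\<dots> = y" using z by simp
    finally show "z = y" .
  qed
  have "uinv x = y" unfolding uinv_def
  proof (rule the_equality)
    show "y * x = 1 \<and> x * y = 1" using y by simp
  next
    fix z assume "z * x = 1 \<and> x * z = 1" then show "z = y" by (rule uq)
  qed
  then show ?thesis using y by simp
qed

lemma uinv_unique:
  fixes x :: "'q::ring_1"
  assumes "is_unit x" "y * x = 1" shows "uinv x = y"
proof -
  have u: "x * uinv x = 1" using uinv_prop[OF assms(1)] by simp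
  have "y = y * (x * uinv x)" using u by simp
  also have "\<dots> = uinv x" using assms(2) by (simp add: mult.assoc[symmetric])
  finally show ?thesis by simp
qed

lemma hom_zero: "is_ring_hom f \<Longrightarrow> f 0 = 0"
proof -
  assume h: "is_ring_hom f"
  have "f (0 + 0) = f 0 + f 0" using h unfolding is_ring_hom_def by blast
  then show ?thesis by simp
qed

lemma Dpow_Suc': "Dpow D (Suc n) = {d \<circ> \<delta> | d \<delta>. d \<in> Dpow D n \<and> \<delta> \<in> D}"
proof (induction n)
  case 0
  show ?case by auto
next
  case (Suc n)
  have "Dpow D (Suc (Suc n)) = {\<delta> \<circ> d | \<delta> d. \<delta> \<in> D \<and> d \<in> Dpow D (Suc n)}" by simp
  also have "\<dots> = {\<delta> \<circ> (d' \<circ> \<delta>') | \<delta> d' \<delta>'. \<delta> \<in> D \<and> d' \<in> Dpow D n \<and> \<delta>' \<in> D}"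
    unfolding Suc by blast
  also have "\<dots> = {(\<delta> \<circ> d') \<circ> \<delta>' | \<delta> d' \<delta>'. \<delta> \<in> D \<and> d' \<in> Dpow D n \<and> \<delta>' \<in> D}"
    by (simp add: comp_assoc)
  also have "\<dots> = {d \<circ> \<delta>' | d \<delta>'. d \<in> Dpow D (Suc n) \<and> \<delta>' \<in> D}" by auto
  finally show ?case .
qed

locale P25 =
  fixes alg :: "'k::field \<Rightarrow> 'e::ring_1"
    and A :: "'e set" and \<Delta> :: "('e \<Rightarrow> 'e) set" and S :: "'e set"
    and \<phi> :: "'e \<Rightarrow> 'q::ring_1"
  assumes alg: "K_algebra_map alg"
    and sub: "subalgebra alg A"
    and der: "\<Delta> \<subseteq> Der alg A"
    and ore: "regular_left_Ore UNIV S"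
    and SN: "S \<subseteq> N_Delta_i \<Delta> 0"
    and loc: "left_localization S \<phi>"
begin

abbreviation iv where "iv s \<equiv> uinv (\<phi> s)"

lemma d_add: "\<delta> \<in> \<Delta> \<Longrightarrow> \<delta> (x + y) = \<delta> x + \<delta> y"
  using der unfolding Der_def by blast
lemma d_mult: "\<delta> \<in> \<Delta> \<Longrightarrow> \<delta> (x * y) = \<delta> x * y + x * \<delta> y"
  using der unfolding Der_def by blast
lemma d_A: "\<delta> \<in> \<Delta> \<Longrightarrow> a \<in> A \<Longrightarrow> \<delta> (a * x) = a * \<delta> x"
  using der unfolding Der_def by blast
lemma d_alg: "\<delta> \<in> \<Delta> \<Longrightarrow> \<delta> (alg k * x) = alg k * \<delta> x"
  using der unfolding Der_def by blast
lemma d_zero: "\<delta> \<in> \<Delta> \<Longrightarrow> \<delta> 0 = 0"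
  using d_add[of \<delta> 0 0] by simp
lemma d_one: "\<delta> \<in> \<Delta> \<Longrightarrow> \<delta> 1 = 0"
  using d_mult[of \<delta> 1 1] by simp
lemma d_neg: "\<delta> \<in> \<Delta> \<Longrightarrow> \<delta> (- x) = - \<delta> x"
  using d_add[of \<delta> x "-x"] d_zero[of \<delta>] minus_unique[of "\<delta> x" "\<delta> (-x)"] by simp
lemma d_Aelem: "\<delta> \<in> \<Delta> \<Longrightarrow> a \<in> A \<Longrightarrow> \<delta> a = 0"
  using d_A[of \<delta> a 1] d_one[of \<delta>] by simp
lemma d_algelem: "\<delta> \<in> \<Delta> \<Longrightarrow> \<delta> (alg k) = 0"
  using d_alg[of \<delta> k 1] d_one[of \<delta>] by simp

lemma d_S: "\<delta> \<in> \<Delta> \<Longrightarrow> s \<in> S \<Longrightarrow> \<delta> s = 0"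
proof -
  assume "\<delta> \<in> \<Delta>" "s \<in> S"
  then have "\<delta> \<circ> id \<in> Dpow \<Delta> (Suc 0)" by auto
  moreover have "s \<in> N_Delta_i \<Delta> 0" using SN \<open>s \<in> S\<close> by blast
  ultimately have "(\<delta> \<circ> id) s = 0" unfolding N_Delta_i_def by blast
  then show ?thesis by simp
qed

lemma S_one: "1 \<in> S" using ore unfolding regular_left_Ore_def by blast
lemma S_mult: "s \<in> S \<Longrightarrow> t \<in> S \<Longrightarrow> s * t \<in> S" using ore unfolding regular_left_Ore_def by blast
lemma S_regL: "s \<in> S \<Longrightarrow> s * r = 0 \<Longrightarrow> r = 0" using ore unfolding regular_left_Ore_def by blast
lemma S_regR: "s \<in> S \<Longrightarrow> r * s = 0 \<Longrightarrow> r = 0" using ore unfolding regular_left_Ore_def by blast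
lemma S_ore: "s \<in> S \<Longrightarrow> \<exists>s'\<in>S. \<exists>r'. s' * r = r' * s" using ore unfolding regular_left_Ore_def by blast

lemma hom: "is_ring_hom \<phi>" using loc unfolding left_localization_def by blast
lemma inj: "inj \<phi>" using loc unfolding left_localization_def by blast
lemma p_add: "\<phi> (x + y) = \<phi> x + \<phi> y" using hom unfolding is_ring_hom_def by blast
lemma p_mult: "\<phi> (x * y) = \<phi> x * \<phi> y" using hom unfolding is_ring_hom_def by blast
lemma p_one: "\<phi> 1 = 1" using hom unfolding is_ring_hom_def by blast
lemma p_zero: "\<phi> 0 = 0" using hom_zero[OF hom] .
lemma repr: "\<exists>s\<in>S. \<exists>e. q = iv s * \<phi> e" using loc unfolding left_localization_def by blast
lemma unitS: "s \<in> S \<Longrightarrow> is_unit (\<phi> s)" using loc unfolding left_localization_def by blast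
lemma ivL: "s \<in> S \<Longrightarrow> iv s * \<phi> s = 1" using uinv_prop[OF unitS] by blast
lemma ivR: "s \<in> S \<Longrightarrow> \<phi> s * iv s = 1" using uinv_prop[OF unitS] by blast
lemma iv_one: "iv 1 = 1" using uinv_unique[OF unitS[OF S_one], of 1] p_one by simp

lemma cancelL: "u \<in> S \<Longrightarrow> \<phi> u * a = \<phi> u * b \<Longrightarrow> a = b"
proof -
  assume u: "u \<in> S" "\<phi> u * a = \<phi> u * b"
  have "a = (iv u * \<phi> u) * a" using ivL[OF u(1)] by simp
  also have "\<dots> = iv u * (\<phi> u * a)" by (rule mult.assoc)
  also have "\<dots> = iv u * (\<phi> u * b)" using u by simp
  also have "\<dots> = (iv u * \<phi> u) * b" by (rule mult.assoc[symmetric])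
  also have "\<dots> = b" using ivL[OF u(1)] by simp
  finally show ?thesis .
qed

lemma iv_mult: "s \<in> S \<Longrightarrow> t \<in> S \<Longrightarrow> iv (t * s) = iv s * iv t"
proof -
  assume st: "s \<in> S" "t \<in> S"
  have "iv s * iv t * \<phi> (t * s) = iv s * (iv t * \<phi> t) * \<phi> s"
    by (simp add: p_mult mult.assoc)
  also have "\<dots> = 1" using ivL st by simp
  finally show ?thesis using uinv_unique[OF unitS[OF S_mult[OF st(2) st(1)]]] by blast
qed

lemma frac_eq_intro:
  assumes "s \<in> S" "t \<in> S" "s' \<in> S" "s' * t = r' * s" "r' * x = s' * y"
  shows "iv s * \<phi> x = iv t * \<phi> y"
proof -
  have u: "s' * t \<in> S" using assms S_mult by blast
  have "\<phi> (s' * t) * (iv s * \<phi> x) = \<phi> r' * (\<phi> s * iv s) * \<phi> x"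
    using assms(4) by (simp add: p_mult mult.assoc)
  also have "\<dots> = \<phi> (r' * x)" using ivR[OF assms(1)] by (simp add: p_mult)
  also have "\<dots> = \<phi> (s' * y)" using assms(5) by simp
  also have "\<dots> = \<phi> s' * (\<phi> t * iv t) * \<phi> y" using ivR[OF assms(2)] by (simp add: p_mult)
  also have "\<dots> = \<phi> (s' * t) * (iv t * \<phi> y)" by (simp add: p_mult mult.assoc)
  finally show ?thesis using cancelL[OF u] by blast
qed

lemma shift: "s \<in> S \<Longrightarrow> u \<in> S \<Longrightarrow> u = a * s \<Longrightarrow> iv s * \<phi> x = iv u * \<phi> (a * x)"
  using frac_eq_intro[of s u 1 a x "a * x"] S_one by simp

lemma zero_if: "\<delta> \<in> \<Delta> \<Longrightarrow> s \<in> S \<Longrightarrow> a * s \<in> S \<Longrightarrow> \<delta> a = 0"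
proof -
  assume h: "\<delta> \<in> \<Delta>" "s \<in> S" "a * s \<in> S"
  have "\<delta> (a * s) = \<delta> a * s" using d_mult[OF h(1)] d_S[OF h(1) h(2)] by simp
  then have "\<delta> a * s = 0" using d_S[OF h(1) h(3)] by simp
  then show ?thesis using S_regR[OF h(2)] by blast
qed

lemma frac_eq_elim:
  assumes "s \<in> S" "t \<in> S" "iv s * \<phi> e = iv t * \<phi> f"
  shows "\<exists>s'\<in>S. \<exists>r'. s' * t = r' * s \<and> r' * e = s' * f"
proof -
  obtain s' r' where sr: "s' \<in> S" "s' * t = r' * s" using S_ore[OF assms(1), of t] by blast
  have "\<phi> (r' * e) = \<phi> r' * (\<phi> s * iv s) * \<phi> e" using ivR[OF assms(1)] by (simp add: p_mult)
  also have "\<dots> = \<phi> (r' * s) * (iv s * \<phi> e)" by (simp add: p_mult mult.assoc)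
  also have "\<dots> = \<phi> (s' * t) * (iv t * \<phi> f)" using sr assms(3) by simp
  also have "\<dots> = \<phi> s' * (\<phi> t * iv t) * \<phi> f" by (simp add: p_mult mult.assoc)
  also have "\<dots> = \<phi> (s' * f)" using ivR[OF assms(2)] by (simp add: p_mult)
  finally have "r' * e = s' * f" using inj by (simp add: inj_eq)
  then show ?thesis using sr by blast
qed

lemma welldef:
  assumes d: "\<delta> \<in> \<Delta>" and "s \<in> S" "t \<in> S" "iv s * \<phi> e = iv t * \<phi> f"
  shows "iv s * \<phi> (\<delta> e) = iv t * \<phi> (\<delta> f)"
proof -
  obtain s' r' where sr: "s' \<in> S" "s' * t = r' * s" "r' * e = s' * f"
    using frac_eq_elim[OF assms(2-4)] by blast
  have "r' * s \<in> S" using sr assms S_mult by metis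
  then have r0: "\<delta> r' = 0" using zero_if[OF d assms(2)] by blast
  have "\<delta> (r' * e) = \<delta> (s' * f)" using sr by simp
  then have "r' * \<delta> e = s' * \<delta> f" using d_mult[OF d] r0 d_S[OF d sr(1)] by simp
  then show ?thesis using frac_eq_intro[OF assms(2,3) sr(1,2)] by blast
qed

lemma swap: "s \<in> S \<Longrightarrow> t \<in> S \<Longrightarrow> \<phi> x * \<phi> t = \<phi> s * \<phi> y \<Longrightarrow> iv s * \<phi> x = \<phi> y * iv t"
proof -
  assume h: "s \<in> S" "t \<in> S" "\<phi> x * \<phi> t = \<phi> s * \<phi> y"
  have "iv s * \<phi> x = iv s * (\<phi> x * \<phi> t) * iv t" using ivR[OF h(2)] by (simp add: mult.assoc)
  also have "\<dots> = (iv s * \<phi> s) * \<phi> y * iv t" using h(3) by (simp add: mult.assoc)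
  also have "\<dots> = \<phi> y * iv t" using ivL[OF h(1)] by simp
  finally show ?thesis .
qed


definition Dext where "Dext \<delta> q = (SOME r. \<exists>s\<in>S. \<exists>e. q = iv s * \<phi> e \<and> r = iv s * \<phi> (\<delta> e))"

lemma Dext_frac: assumes d: "\<delta> \<in> \<Delta>" and s: "s \<in> S" shows "Dext \<delta> (iv s * \<phi> e) = iv s * \<phi> (\<delta> e)"
proof -
  let ?P = "\<lambda>r. \<exists>s'\<in>S. \<exists>e'. iv s * \<phi> e = iv s' * \<phi> e' \<and> r = iv s' * \<phi> (\<delta> e')"
  have "?P (iv s * \<phi> (\<delta> e))" using s by blast
  then have "?P (Dext \<delta> (iv s * \<phi> e))" unfolding Dext_def by (rule someI)
  then obtain s' e' where h: "s' \<in> S" "iv s * \<phi> e = iv s' * \<phi> e'" "Dext \<delta> (iv s * \<phi> e) = iv s' * \<phi> (\<delta> e')"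
    by blast
  show ?thesis using welldef[OF d s h(1) h(2)] h(3) by simp
qed

lemma Dext_unique: assumes d: "\<delta> \<in> \<Delta>"
  shows "\<exists>!D. \<forall>s\<in>S. \<forall>e. D (iv s * \<phi> e) = iv s * \<phi> (\<delta> e)"
proof (rule ex1I)
  show "\<forall>s\<in>S. \<forall>e. Dext \<delta> (iv s * \<phi> e) = iv s * \<phi> (\<delta> e)" using Dext_frac[OF d] by blast
next
  fix D assume D: "\<forall>s\<in>S. \<forall>e. D (iv s * \<phi> e) = iv s * \<phi> (\<delta> e)"
  show "D = Dext \<delta>"
  proof
    fix q obtain s e where "s \<in> S" "q = iv s * \<phi> e" using repr by blast
    then show "D q = Dext \<delta> q" using D Dext_frac[OF d] by simp
  qed
qed

lemma ext_eq: assumes d: "\<delta> \<in> \<Delta>" shows "ext_der S \<phi> \<delta> = Dext \<delta>"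
  unfolding ext_der_def
proof (rule the1_equality[OF Dext_unique[OF d]])
  show "\<forall>s\<in>S. \<forall>e. Dext \<delta> (iv s * \<phi> e) = iv s * \<phi> (\<delta> e)" using Dext_frac[OF d] by blast
qed

lemma ext_frac: "\<delta> \<in> \<Delta> \<Longrightarrow> s \<in> S \<Longrightarrow> ext_der S \<phi> \<delta> (iv s * \<phi> e) = iv s * \<phi> (\<delta> e)"
  using ext_eq Dext_frac by simp

lemma ext_phi: "\<delta> \<in> \<Delta> \<Longrightarrow> ext_der S \<phi> \<delta> (\<phi> e) = \<phi> (\<delta> e)"
  using ext_frac[OF _ S_one, of \<delta> e] iv_one by simp

lemma ext_add: assumes d: "\<delta> \<in> \<Delta>"
  shows "ext_der S \<phi> \<delta> (q1 + q2) = ext_der S \<phi> \<delta> q1 + ext_der S \<phi> \<delta> q2"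
proof -
  let ?E = "ext_der S \<phi> \<delta>"
  obtain s e where se: "s \<in> S" "q1 = iv s * \<phi> e" using repr by blast
  obtain t f where tf: "t \<in> S" "q2 = iv t * \<phi> f" using repr by blast
  obtain s' r' where sr: "s' \<in> S" "s' * t = r' * s" using S_ore[OF se(1), of t] by blast
  define u where "u = s' * t"
  have u: "u \<in> S" unfolding u_def using sr tf S_mult by blast
  have r0: "\<delta> r' = 0" using zero_if[OF d se(1)] u sr unfolding u_def by simp
  have s0: "\<delta> s' = 0" using d_S[OF d sr(1)] .
  have e1: "\<And>x. iv s * \<phi> x = iv u * \<phi> (r' * x)" using shift[OF se(1) u] sr unfolding u_def by simp
  have e2: "\<And>x. iv t * \<phi> x = iv u * \<phi> (s' * x)" using shift[OF tf(1) u] unfolding u_def by simp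
  have "q1 + q2 = iv u * \<phi> (r' * e + s' * f)" using se tf e1 e2 by (simp add: p_add distrib_left)
  then have "?E (q1 + q2) = iv u * \<phi> (\<delta> (r' * e + s' * f))" using ext_frac[OF d u] by simp
  also have "\<dots> = iv u * \<phi> (r' * \<delta> e) + iv u * \<phi> (s' * \<delta> f)"
    using d_add[OF d] d_mult[OF d] r0 s0 by (simp add: p_add distrib_left)
  also have "\<dots> = iv s * \<phi> (\<delta> e) + iv t * \<phi> (\<delta> f)" using e1 e2 by simp
  also have "\<dots> = ?E q1 + ?E q2" using se tf ext_frac[OF d] by simp
  finally show ?thesis .
qed

lemma ext_mult: assumes d: "\<delta> \<in> \<Delta>"
  shows "ext_der S \<phi> \<delta> (q1 * q2) = ext_der S \<phi> \<delta> q1 * q2 + q1 * ext_der S \<phi> \<delta> q2"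
proof -
  let ?E = "ext_der S \<phi> \<delta>"
  obtain s e where se: "s \<in> S" "q1 = iv s * \<phi> e" using repr by blast
  obtain t f where tf: "t \<in> S" "q2 = iv t * \<phi> f" using repr by blast
  obtain s'' r'' where sr: "s'' \<in> S" "s'' * e = r'' * t" using S_ore[OF tf(1), of e] by blast
  have h1: "iv s'' * \<phi> r'' = \<phi> e * iv t"
    by (rule swap[OF sr(1) tf(1)]) (simp add: p_mult[symmetric] sr(2))
  have "\<delta> (r'' * t) = \<delta> r'' * t" using d_mult[OF d] d_S[OF d tf(1)] by simp
  moreover have "\<delta> (s'' * e) = s'' * \<delta> e" using d_mult[OF d] d_S[OF d sr(1)] by simp
  ultimately have "\<delta> r'' * t = s'' * \<delta> e" using sr(2) by simp
  then have h2: "iv s'' * \<phi> (\<delta> r'') = \<phi> (\<delta> e) * iv t"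
    by (intro swap[OF sr(1) tf(1)]) (simp add: p_mult[symmetric])
  have ss: "s'' * s \<in> S" using S_mult sr(1) se(1) by blast
  have "q1 * q2 = iv s * (\<phi> e * iv t) * \<phi> f" using se tf by (simp add: mult.assoc)
  also have "\<dots> = iv s * iv s'' * \<phi> (r'' * f)" by (simp add: h1[symmetric] p_mult mult.assoc)
  also have "\<dots> = iv (s'' * s) * \<phi> (r'' * f)" using iv_mult[OF se(1) sr(1)] by simp
  finally have q: "q1 * q2 = iv (s'' * s) * \<phi> (r'' * f)" .
  have "?E (q1 * q2) = iv (s'' * s) * \<phi> (\<delta> (r'' * f))" using q ext_frac[OF d ss] by simp
  also have "\<dots> = iv s * (iv s'' * \<phi> (\<delta> r'')) * \<phi> f + iv s * (iv s'' * \<phi> r'') * \<phi> (\<delta> f)"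
    using iv_mult[OF se(1) sr(1)] d_mult[OF d] by (simp add: p_add p_mult distrib_left distrib_right mult.assoc)
  also have "\<dots> = iv s * \<phi> (\<delta> e) * (iv t * \<phi> f) + iv s * \<phi> e * (iv t * \<phi> (\<delta> f))"
    unfolding h1 h2 by (simp add: mult.assoc)
  also have "\<dots> = ?E q1 * q2 + q1 * ?E q2" using se tf ext_frac[OF d] by simp
  finally show ?thesis .
qed

lemma ext_Der: assumes d: "\<delta> \<in> \<Delta>" shows "ext_der S \<phi> \<delta> \<in> Der (\<phi> \<circ> alg) (\<phi> ` A)"
proof -
  let ?E = "ext_der S \<phi> \<delta>"
  have c: "?E (\<phi> a * x) = \<phi> a * ?E x" if "\<delta> a = 0" for a x
    using ext_mult[OF d, of "\<phi> a" x] ext_phi[OF d, of a] that p_zero by simp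
  show ?thesis unfolding Der_def
    using ext_add[OF d] ext_mult[OF d] c d_algelem[OF d] d_Aelem[OF d] by auto
qed

definition M where "M k = {b. \<forall>d\<in>Dpow \<Delta> k. d b = 0}"

lemma M0: "M 0 = {0}" by (auto simp: M_def)
lemma MSuc: "b \<in> M (Suc k) \<longleftrightarrow> (\<forall>\<delta>\<in>\<Delta>. \<delta> b \<in> M k)"
proof -
  have "b \<in> M (Suc k) \<longleftrightarrow> (\<forall>d \<delta>. d \<in> Dpow \<Delta> k \<and> \<delta> \<in> \<Delta> \<longrightarrow> (d \<circ> \<delta>) b = 0)"
    unfolding M_def Dpow_Suc' by blast
  then show ?thesis unfolding M_def by auto
qed
lemma N_M: "N_Delta_i \<Delta> i = M (Suc i)" by (simp add: N_Delta_i_def M_def)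

lemma M_zero: "0 \<in> M k"
  by (induction k) (auto simp: M0 MSuc d_zero)
lemma M_add: "x \<in> M k \<Longrightarrow> y \<in> M k \<Longrightarrow> x + y \<in> M k"
  by (induction k arbitrary: x y) (auto simp: M0 MSuc d_add)
lemma M_neg: "x \<in> M k \<Longrightarrow> - x \<in> M k"
  by (induction k arbitrary: x) (auto simp: M0 MSuc d_neg)
lemma M_mono: "x \<in> M k \<Longrightarrow> x \<in> M (Suc k)"
  by (induction k arbitrary: x) (auto simp: M0 MSuc d_zero)
lemma M_mono_le: "k \<le> l \<Longrightarrow> x \<in> M k \<Longrightarrow> x \<in> M l"
  by (induction l rule: dec_induct) (auto intro: M_mono)

lemma M_mult_aux: "a + b \<le> n \<Longrightarrow> x \<in> M a \<Longrightarrow> y \<in> M b \<Longrightarrow> x * y \<in> M (a + b - 1)"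
proof (induction n arbitrary: a b x y)
  case 0
  then have "x = 0" using M0 by simp
  then show ?case using M_zero by simp
next
  case (Suc n)
  show ?case
  proof (cases "a = 0 \<or> b = 0")
    case True
    then have "x = 0 \<or> y = 0" using Suc.prems(2,3) M0 by (elim disjE) simp_all
    then have "x * y = 0" by (elim disjE) simp_all
    then show ?thesis using M_zero by simp
  next
    case False
    then obtain a' b' where ab: "a = Suc a'" "b = Suc b'" by (meson not0_implies_Suc)
    have "x * y \<in> M (Suc (a' + b'))"
      unfolding MSuc
    proof
      fix \<delta> assume d: "\<delta> \<in> \<Delta>"
      have x1: "\<delta> x \<in> M a'" using Suc.prems(2) ab(1) d MSuc by blast
      have y1: "\<delta> y \<in> M b'" using Suc.prems(3) ab(2) d MSuc by blast
      have le1: "a' + b \<le> n" "a + b' \<le> n" using Suc.prems(1) ab by simp_all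
      have 1: "\<delta> x * y \<in> M (a' + b')"
        using Suc.IH[OF le1(1) x1 Suc.prems(3)] ab by simp
      have 2: "x * \<delta> y \<in> M (a' + b')"
        using Suc.IH[OF le1(2) Suc.prems(2) y1] ab by simp
      show "\<delta> (x * y) \<in> M (a' + b')" using d_mult[OF d] M_add[OF 1 2] by simp
    qed
    then show ?thesis using ab by simp
  qed
qed

lemma M_mult: "x \<in> M (Suc i) \<Longrightarrow> y \<in> M (Suc j) \<Longrightarrow> x * y \<in> M (Suc (i + j))"
  using M_mult_aux[of "Suc i" "Suc j" "Suc i + Suc j" x y] by simp

lemma M_ore: "s \<in> S \<Longrightarrow> s' \<in> S \<Longrightarrow> s' * r = r' * s \<Longrightarrow> r \<in> M k \<Longrightarrow> r' \<in> M k"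
proof (induction k arbitrary: r r')
  case 0
  then have "r' * s = 0" using M0 by simp
  then show ?case using S_regR[OF 0(1)] M0 by simp
next
  case (Suc k)
  show ?case unfolding MSuc
  proof
    fix \<delta> assume d: "\<delta> \<in> \<Delta>"
    have "\<delta> (r' * s) = \<delta> r' * s" using d_mult[OF d] d_S[OF d Suc.prems(1)] by simp
    moreover have "\<delta> (s' * r) = s' * \<delta> r" using d_mult[OF d] d_S[OF d Suc.prems(2)] by simp
    ultimately have "s' * \<delta> r = \<delta> r' * s" using Suc.prems(3) by simp
    then show "\<delta> r' \<in> M k" using Suc.IH[OF Suc.prems(1,2)] Suc.prems(4) d MSuc by blast
  qed
qed

lemma N_eq: "N_Delta \<Delta> = (\<Union>i. M (Suc i))" unfolding N_Delta_def N_M by simp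

lemma N_subring: "subring (N_Delta \<Delta>)"
proof -
  have one: "1 \<in> M (Suc 0)" unfolding MSuc M0 using d_one by simp
  have add: "x + y \<in> N_Delta \<Delta>" if hx: "x \<in> N_Delta \<Delta>" "y \<in> N_Delta \<Delta>" for x y
  proof -
    obtain i j where "x \<in> M (Suc i)" "y \<in> M (Suc j)" using hx unfolding N_eq by blast
    then have "x \<in> M (Suc (i + j))" "y \<in> M (Suc (i + j))"
      using M_mono_le[of "Suc i" "Suc (i + j)" x] M_mono_le[of "Suc j" "Suc (i + j)" y] by simp_all
    then show ?thesis using M_add N_eq by blast
  qed
  have mul: "x * y \<in> N_Delta \<Delta>" if hx: "x \<in> N_Delta \<Delta>" "y \<in> N_Delta \<Delta>" for x y
  proof -
    obtain i j where "x \<in> M (Suc i)" "y \<in> M (Suc j)" using hx unfolding N_eq by blast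
    then show ?thesis using M_mult N_eq by blast
  qed
  have neg: "- x \<in> N_Delta \<Delta>" if "x \<in> N_Delta \<Delta>" for x
    using that M_neg N_eq by blast
  have "1 \<in> N_Delta \<Delta>" using one unfolding N_eq by blast
  then show ?thesis unfolding subring_def using add mul neg by blast
qed

lemma N_ore: "regular_left_Ore (N_Delta \<Delta>) S"
proof -
  have SsN: "S \<subseteq> N_Delta \<Delta>" using SN unfolding N_Delta_def by blast
  have o: "\<exists>s'\<in>S. \<exists>r'\<in>N_Delta \<Delta>. s' * r = r' * s" if hx: "s \<in> S" "r \<in> N_Delta \<Delta>" for s r
  proof -
    obtain i where i: "r \<in> M (Suc i)" using hx unfolding N_eq by blast
    obtain s' r' where sr: "s' \<in> S" "s' * r = r' * s" using S_ore[OF hx(1)] by blast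
    have "r' \<in> M (Suc i)" using M_ore[OF hx(1) sr(1) sr(2) i] .
    then show ?thesis using sr N_eq by blast
  qed
  show ?thesis unfolding regular_left_Ore_def
  proof (intro conjI)
    show "S \<subseteq> N_Delta \<Delta>" by (rule SsN)
    show "1 \<in> S" by (rule S_one)
    show "\<forall>s\<in>S. \<forall>t\<in>S. s * t \<in> S" using S_mult by blast
    show "\<forall>s\<in>S. \<forall>r\<in>N_Delta \<Delta>. (s * r = 0 \<longrightarrow> r = 0) \<and> (r * s = 0 \<longrightarrow> r = 0)"
      using S_regL S_regR by blast
    show "\<forall>s\<in>S. \<forall>r\<in>N_Delta \<Delta>. \<exists>s'\<in>S. \<exists>r'\<in>N_Delta \<Delta>. s' * r = r' * s" using o by blast
  qed
qed

abbreviation \<Delta>' where "\<Delta>' \<equiv> ext_der S \<phi> ` \<Delta>"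

lemma corr1: "D' \<in> Dpow \<Delta>' n \<Longrightarrow> \<exists>d\<in>Dpow \<Delta> n. \<forall>s\<in>S. \<forall>e. D' (iv s * \<phi> e) = iv s * \<phi> (d e)"
proof (induction n arbitrary: D')
  case 0 then show ?case by simp
next
  case (Suc n)
  then obtain \<delta> D'' where h: "\<delta> \<in> \<Delta>" "D' = ext_der S \<phi> \<delta> \<circ> D''" "D'' \<in> Dpow \<Delta>' n" by auto
  obtain d where d: "d \<in> Dpow \<Delta> n" "\<forall>s\<in>S. \<forall>e. D'' (iv s * \<phi> e) = iv s * \<phi> (d e)"
    using Suc.IH[OF h(3)] by blast
  have "\<delta> \<circ> d \<in> Dpow \<Delta> (Suc n)" using h(1) d(1) by auto
  moreover have "\<forall>s\<in>S. \<forall>e. D' (iv s * \<phi> e) = iv s * \<phi> ((\<delta> \<circ> d) e)"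
    using h d ext_frac[OF h(1)] by simp
  ultimately show ?case by blast
qed

lemma corr2: "d \<in> Dpow \<Delta> n \<Longrightarrow> \<exists>D'\<in>Dpow \<Delta>' n. \<forall>s\<in>S. \<forall>e. D' (iv s * \<phi> e) = iv s * \<phi> (d e)"
proof (induction n arbitrary: d)
  case 0 then show ?case by simp
next
  case (Suc n)
  then obtain \<delta> d'' where h: "\<delta> \<in> \<Delta>" "d = \<delta> \<circ> d''" "d'' \<in> Dpow \<Delta> n" by auto
  obtain D'' where D: "D'' \<in> Dpow \<Delta>' n" "\<forall>s\<in>S. \<forall>e. D'' (iv s * \<phi> e) = iv s * \<phi> (d'' e)"
    using Suc.IH[OF h(3)] by blast
  have "ext_der S \<phi> \<delta> \<circ> D'' \<in> Dpow \<Delta>' (Suc n)" using h(1) D(1) by auto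
  moreover have "\<forall>s\<in>S. \<forall>e. (ext_der S \<phi> \<delta> \<circ> D'') (iv s * \<phi> e) = iv s * \<phi> (d e)"
    using h D ext_frac[OF h(1)] by simp
  ultimately show ?case by blast
qed

lemma Q_M: "{q. \<forall>D'\<in>Dpow \<Delta>' k. D' q = 0} = loc_set S \<phi> (M k)"
proof
  show "{q. \<forall>D'\<in>Dpow \<Delta>' k. D' q = 0} \<subseteq> loc_set S \<phi> (M k)"
  proof
    fix q assume q: "q \<in> {q. \<forall>D'\<in>Dpow \<Delta>' k. D' q = 0}"
    obtain s e where se: "s \<in> S" "q = iv s * \<phi> e" using repr by blast
    have "d e = 0" if d: "d \<in> Dpow \<Delta> k" for d
    proof -
      obtain D' where D: "D' \<in> Dpow \<Delta>' k" "\<forall>s\<in>S. \<forall>e. D' (iv s * \<phi> e) = iv s * \<phi> (d e)"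
        using corr2[OF d] by blast
      have "iv s * \<phi> (d e) = 0" using q D se by auto
      then have "\<phi> s * (iv s * \<phi> (d e)) = 0" by simp
      then have "\<phi> (d e) = \<phi> 0" using ivR[OF se(1)] p_zero by (simp add: mult.assoc[symmetric])
      then show "d e = 0" using inj by (simp add: inj_eq)
    qed
    then have "e \<in> M k" unfolding M_def by blast
    then show "q \<in> loc_set S \<phi> (M k)" unfolding loc_set_def using se by blast
  qed
next
  show "loc_set S \<phi> (M k) \<subseteq> {q. \<forall>D'\<in>Dpow \<Delta>' k. D' q = 0}"
  proof
    fix q assume "q \<in> loc_set S \<phi> (M k)"
    then obtain s n where sn: "s \<in> S" "n \<in> M k" "q = iv s * \<phi> n" unfolding loc_set_def by blast
    have "D' q = 0" if D: "D' \<in> Dpow \<Delta>' k" for D'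
    proof -
      obtain d where d: "d \<in> Dpow \<Delta> k" "\<forall>s\<in>S. \<forall>e. D' (iv s * \<phi> e) = iv s * \<phi> (d e)"
        using corr1[OF D] by blast
      have "d n = 0" using sn(2) d(1) unfolding M_def by blast
      then show ?thesis using d(2) sn p_zero by simp
    qed
    then show "q \<in> {q. \<forall>D'\<in>Dpow \<Delta>' k. D' q = 0}" by blast
  qed
qed

lemma Q_Ni: "N_Delta_i \<Delta>' i = loc_set S \<phi> (N_Delta_i \<Delta> i)"
  using Q_M[of "Suc i"] unfolding N_M by (simp add: N_Delta_i_def)

lemma Q_N: "N_Delta \<Delta>' = loc_set S \<phi> (N_Delta \<Delta>)"
proof -
  have "N_Delta \<Delta>' = (\<Union>i. loc_set S \<phi> (N_Delta_i \<Delta> i))" unfolding N_Delta_def Q_Ni by simp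
  also have "\<dots> = loc_set S \<phi> (\<Union>i. N_Delta_i \<Delta> i)" unfolding loc_set_def by blast
  finally show ?thesis unfolding N_Delta_def .
qed
end

theorem proposition2p5:
  fixes alg :: "'k::field \<Rightarrow> 'e::ring_1"
    and A :: "'e set" and \<Delta> :: "('e \<Rightarrow> 'e) set" and S :: "'e set"
    and \<phi> :: "'e \<Rightarrow> 'q::ring_1"
  assumes "K_algebra_map alg"
    and "subalgebra alg A"
    and "\<Delta> \<subseteq> Der alg A"
    and "regular_left_Ore UNIV S"
    and "S \<subseteq> N_Delta_i \<Delta> 0"
    and "left_localization S \<phi>"
  shows "(inj \<phi> \<and> is_ring_hom \<phi>
       \<and> (\<forall>\<delta>\<in>\<Delta>. (\<exists>!D. \<forall>s\<in>S. \<forall>e. D (uinv (\<phi> s) * \<phi> e) = uinv (\<phi> s) * \<phi> (\<delta> e))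
                 \<and> ext_der S \<phi> \<delta> \<in> Der (\<phi> \<circ> alg) (\<phi> ` A)
                 \<and> (\<forall>e. ext_der S \<phi> \<delta> (\<phi> e) = \<phi> (\<delta> e))))
       \<and> (subring (N_Delta \<Delta>) \<and> regular_left_Ore (N_Delta \<Delta>) S)
       \<and> N_Delta (ext_der S \<phi> ` \<Delta>) = loc_set S \<phi> (N_Delta \<Delta>)
       \<and> (\<forall>i. N_Delta_i (ext_der S \<phi> ` \<Delta>) i = loc_set S \<phi> (N_Delta_i \<Delta> i))"
proof -
  interpret P: P25 alg A \<Delta> S \<phi> using assms by unfold_locales
  have 1: "\<forall>\<delta>\<in>\<Delta>. (\<exists>!D. \<forall>s\<in>S. \<forall>e. D (uinv (\<phi> s) * \<phi> e) = uinv (\<phi> s) * \<phi> (\<delta> e))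
                 \<and> ext_der S \<phi> \<delta> \<in> Der (\<phi> \<circ> alg) (\<phi> ` A)
                 \<and> (\<forall>e. ext_der S \<phi> \<delta> (\<phi> e) = \<phi> (\<delta> e))"
    using P.Dext_unique P.ext_Der P.ext_phi by blast
  show ?thesis using P.inj P.hom 1 P.N_subring P.N_ore P.Q_N P.Q_Ni by blast
qed

end
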